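(* Let $X$ be a mixed-stable sequence with respect to a full BST $T$. If $GF$ serves $X$ starting with initial tree $T$, then it never restructures the tree: $T_t=T$ for every $t$.
   Context: Binary search tree model and $GF$. Keys are $\{1,\dots,n\}$ and $X=[x_1,\dots,x_m]$ is a query sequence. An algorithm serving $X$ holds a BST $T_{t-1}$ before serving $x_t$, searches $x_t$ from the root, and may then restructure by rotations into $T_t$. Greedy Future ($GF$). After finding $x_t$ in $T_{t-1}$, let $v_1<\dots<v_k$ be the keys on the root-to-$x_t$ path, set $v_0=-\infty$ and $v_{k+1}=+\infty$, and let $R_0,\dots,R_k$ be the subtrees hanging off this path. For each $i$, $\tau(v_i)$ is the smallest $s>t$ with $x_s\in(v_{i-1},v_{i+1})$, or $+\infty$ if there is none. $GF$ rearranges $v_1,\dots,v_k$ as a treap: a BST in key order and a heap in $\tau$, with the smallest $\tau$ at the top. Ties in $\tau$ are broken in favor of the node of smaller depth in $T_{t-1}$. It then reattaches $R_0,\dots,R_k$ unchanged at their unique positions, giving $T_t$. Stable sequences. Let $T$ be a full binary search tree (every inner node has exactly two children), and let $X$ be a query sequence consisting only of keys stored at leaves of $T$. For an inner node $v$, let $X_v$ be the subsequence of $X$ consisting of the queries to keys in the subtree of $v$. - The node $v$ is strongly-stable if consecutive queries of $X_v$ alternate between the left and right subtrees of $v$. - The node $v$ is weakly-stable with a left bias if its left child $u$ is an inner node and $X_v$ repeats cyclically (from some starting phase) the pattern: a query in the left subtree of $u$, then one in the right subtree of $u$, then one in the right subtree of $v$. - Weakly-stable with a right bias is the mirror image: $u$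 is the right child of $v$, and the pattern is right subtree of $u$, left subtree of $u$, left subtree of $v$. In both weakly-stable cases $u$ is called the favored child of $v$. $X$ (and $T$) is mixed-stable if every inner node of $T$ is strongly-stable or weakly-stable. *)

theory Defs
  imports "HOL-Library.Tree" "HOL-Library.Extended_Nat" "HOL-Library.Product_Lexorder"
begin

fun search_path :: "nat \<Rightarrow> nat tree \<Rightarrow> nat list" where
  "search_path x Leaf = []"
| "search_path x (Node l a r) =
     a # (if x < a then search_path x l else if a < x then search_path x r else [])"

(* depth of key v (root has depth 0), meaningful when v is in the BST *)
definition depth :: "nat \<Rightarrow> nat tree \<Rightarrow> nat" where
  "depth v T = length (search_path v T) - 1"

(* subtrees R_0,...,R_k hanging off the search path to x, in key order *)
fun hanging :: "nat \<Rightarrow> nat tree \<Rightarrow> nat tree list" where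
  "hanging x Leaf = [Leaf]"
| "hanging x (Node l a r) =
     (if x < a then hanging x l @ [r] else if a < x then l # hanging x r else [l, r])"

fun minidx :: "'b::linorder list \<Rightarrow> nat" where
  "minidx [] = 0"
| "minidx [x] = 0"
| "minidx (x # y # ys) = (let j = minidx (y # ys) in if x \<le> (y # ys) ! j then 0 else Suc j)"

lemma minidx_less: "xs \<noteq> [] \<Longrightarrow> minidx xs < length xs"
  by (induction xs rule: minidx.induct) (auto simp: Let_def)

(* treap from keys (in key order) with priorities (smallest on top), with the
   hanging subtrees ts (length = number of keys + 1) reattached *)
function treap :: "('a \<times> 'b::linorder) list \<Rightarrow> 'a tree list \<Rightarrow> 'a tree" where
  "treap kps ts =
     (if kps = [] then (case ts of [] \<Rightarrow> Leaf | t # _ \<Rightarrow> t)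
      else (let j = minidx (map snd kps) in
            Node (treap (take j kps) (take (Suc j) ts))
                 (fst (kps ! j))
                 (treap (drop (Suc j) kps) (drop (Suc j) ts))))"
  by pat_completeness auto
termination
proof (relation "measure (\<lambda>(kps, ts). length kps)", goal_cases)
  case 1 then show ?case by simp
next
  case (2 kps ts j)
  then have "j < length kps" using minidx_less[of "map snd kps"] by simp
  then show ?case by simp
next
  case (3 kps ts j)
  then show ?case by simp
qed

(* membership of y in the open interval (lo, hi), None meaning -\<infinity> resp. +\<infinity> *)
definition in_window :: "nat option \<Rightarrow> nat option \<Rightarrow> nat \<Rightarrow> bool" where
  "in_window lo hi y =
     ((case lo of None \<Rightarrow> True | Some a \<Rightarrow> a < y) \<and> (case hi of None \<Rightarrow> True | Some b \<Rightarrow> y < b))"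

(* tau: smallest s > t with xs!s in the window, or \<infinity>; indices are 0-based *)
definition next_in :: "nat list \<Rightarrow> nat \<Rightarrow> nat option \<Rightarrow> nat option \<Rightarrow> enat" where
  "next_in xs t lo hi =
     (if \<exists>s. t < s \<and> s < length xs \<and> in_window lo hi (xs ! s)
      then enat (LEAST s. t < s \<and> s < length xs \<and> in_window lo hi (xs ! s))
      else \<infinity>)"

(* one step of Greedy Future: serve query xs!t (0-based) in tree T *)
definition gf_step :: "nat list \<Rightarrow> nat \<Rightarrow> nat tree \<Rightarrow> nat tree" where
  "gf_step xs t T =
     (let q = xs ! t;
          vs = sort (search_path q T);
          k = length vs;
          lo = (\<lambda>i. if i = 0 then None else Some (vs ! (i - 1)));
          hi = (\<lambda>i. if Suc i < k then Some (vs ! Suc i) else None);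
          prio = (\<lambda>i. (next_in xs t (lo i) (hi i), depth (vs ! i) T))
      in treap (map (\<lambda>i. (vs ! i, prio i)) [0..<k]) (hanging q T))"

(* gf_run xs T t = T_t, the tree after serving the first t queries, T_0 = T *)
fun gf_run :: "nat list \<Rightarrow> nat tree \<Rightarrow> nat \<Rightarrow> nat tree" where
  "gf_run xs T 0 = T"
| "gf_run xs T (Suc t) = gf_step xs t (gf_run xs T t)"

definition full_tree :: "'a tree \<Rightarrow> bool" where
  "full_tree T = (\<forall>l a r. Node l a r \<in> subtrees T \<longrightarrow> (l = Leaf \<longleftrightarrow> r = Leaf))"

definition leaf_keys :: "'a tree \<Rightarrow> 'a set" where
  "leaf_keys T = {a. Node Leaf a Leaf \<in> subtrees T}"

definition subseq_in :: "nat list \<Rightarrow> nat tree \<Rightarrow> nat list" where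
  "subseq_in xs v = filter (\<lambda>x. x \<in> set_tree v) xs"

definition strongly_stable :: "nat list \<Rightarrow> nat tree \<Rightarrow> bool" where
  "strongly_stable xs v =
     (case v of Leaf \<Rightarrow> False | Node l a r \<Rightarrow>
       (let Xv = subseq_in xs v in
        \<forall>j. Suc j < length Xv \<longrightarrow> ((Xv ! j \<in> set_tree l) \<longleftrightarrow> (Xv ! Suc j \<in> set_tree r))))"

definition cyclic3 :: "nat list \<Rightarrow> nat set \<Rightarrow> nat set \<Rightarrow> nat set \<Rightarrow> bool" where
  "cyclic3 Xv A B C =
     (\<exists>ph<3. \<forall>j<length Xv.
        Xv ! j \<in> (if (j + ph) mod 3 = 0 then A else if (j + ph) mod 3 = 1 then B else C))"

definition weakly_stable_left :: "nat list \<Rightarrow> nat tree \<Rightarrow> bool" where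
  "weakly_stable_left xs v =
     (case v of Leaf \<Rightarrow> False | Node u a r \<Rightarrow>
       (case u of Leaf \<Rightarrow> False | Node ul b ur \<Rightarrow>
          ul \<noteq> Leaf \<and> cyclic3 (subseq_in xs v) (set_tree ul) (set_tree ur) (set_tree r)))"

definition weakly_stable_right :: "nat list \<Rightarrow> nat tree \<Rightarrow> bool" where
  "weakly_stable_right xs v =
     (case v of Leaf \<Rightarrow> False | Node l a u \<Rightarrow>
       (case u of Leaf \<Rightarrow> False | Node ul b ur \<Rightarrow>
          ur \<noteq> Leaf \<and> cyclic3 (subseq_in xs v) (set_tree ur) (set_tree ul) (set_tree l)))"

definition mixed_stable :: "nat tree \<Rightarrow> nat list \<Rightarrow> bool" where
  "mixed_stable T xs =
     (\<forall>l a r. Node l a r \<in> subtrees T \<and> l \<noteq> Leaf \<longrightarrow>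
        strongly_stable xs (Node l a r) \<or> weakly_stable_left xs (Node l a r)
        \<or> weakly_stable_right xs (Node l a r))"

end

theory Submission
  imports Defs "HOL-Library.Multiset"
begin


lemma bst_subtrees: "bst T \<Longrightarrow> S \<in> subtrees T \<Longrightarrow> bst S"
  by (induction T) auto

lemma set_path_sub: "set (search_path q T) \<subseteq> set_tree T"
  by (induction T) auto

lemma length_hanging: "length (hanging q T) = Suc (length (search_path q T))"
  by (induction T) auto

lemma distinct_path: "bst T \<Longrightarrow> distinct (search_path q T)"
  using set_path_sub by (induction T) fastforce+

lemma minidx_eq:
  "j < length xs \<Longrightarrow> (\<forall>i<length xs. i \<noteq> j \<longrightarrow> xs!j < xs!i) \<Longrightarrow> minidx xs = j"
proof (induction xs arbitrary: j rule: minidx.induct)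
  case 1 then show ?case by simp
next
  case (2 x) then show ?case by simp
next
  case (3 x y ys)
  show ?case
  proof (cases j)
    case 0
    have m: "minidx (y#ys) < length (y#ys)" using minidx_less by blast
    have "x < (y#ys) ! minidx (y#ys)" using "3.prems"(2)[rule_format, of "Suc (minidx (y#ys))"] m 0 by simp
    then show ?thesis using 0 by (simp add: Let_def)
  next
    case (Suc j')
    have IH: "minidx (y#ys) = j'"
    proof (rule "3.IH")
      show "j' < length (y#ys)" using "3.prems" Suc by simp
      show "\<forall>i<length (y # ys). i \<noteq> j' \<longrightarrow> (y # ys) ! j' < (y # ys) ! i"
      proof (intro allI impI)
        fix i assume "i < length (y#ys)" "i \<noteq> j'"
        then show "(y # ys) ! j' < (y # ys) ! i"
          using "3.prems"(2)[rule_format, of "Suc i"] Suc by simp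
      qed
    qed
    have "(y#ys)!j' < x" using "3.prems"(2)[rule_format, of 0] Suc by simp
    then show ?thesis using IH Suc by (simp add: Let_def)
  qed
qed

lemma depth_path: "bst T \<Longrightarrow> i < length (search_path q T) \<Longrightarrow>
   search_path (search_path q T ! i) T = take (Suc i) (search_path q T)"
proof (induction T arbitrary: i)
  case Leaf then show ?case by simp
next
  case (Node l a r)
  show ?case
  proof (cases i)
    case 0 then show ?thesis by auto
  next
    case (Suc i')
    show ?thesis
    proof (cases "q < a")
      case True
      hence "search_path q l ! i' \<in> set_tree l" using Node.prems Suc set_path_sub[of q l] True by (auto intro: nth_mem)
      then show ?thesis using Node True Suc by auto
    next
      case False
      show ?thesis
      proof (cases "a < q")
        case True
        hence "search_path q r ! i' \<in> set_tree r" using Node.prems Suc set_path_sub[of q r] False by (auto intro: nth_mem)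
        then show ?thesis using Node True Suc False by auto
      next
        case False2: False
        then show ?thesis using Node.prems Suc False by auto
      qed
    qed
  qed
qed



declare treap.simps[simp del]

lemma treap_Nil: "treap [] [t] = t"
  by (subst treap.simps) simp

lemma sort_left: "\<forall>x\<in>set xs. x < (a::nat) \<Longrightarrow> sort (a # xs) = sort xs @ [a]"
  by (rule properties_for_sort) (auto simp: sorted_append)

lemma sort_right: "\<forall>x\<in>set xs. (a::nat) < x \<Longrightarrow> sort (a # xs) = a # sort xs"
  by (rule properties_for_sort) (auto simp: less_imp_le)

lemma treap_path:
  fixes P :: "nat \<Rightarrow> 'b::linorder"
  assumes "bst T"
    and "\<forall>i j. i < j \<longrightarrow> j < length (search_path q T) \<longrightarrow>
           P (search_path q T ! i) < P (search_path q T ! j)"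
  shows "treap (map (\<lambda>v. (v, P v)) (sort (search_path q T))) (hanging q T) = T"
  using assms
proof (induction T)
  case Leaf
  then show ?case by (simp add: treap_Nil)
next
  case (Node l a r)
  show ?case
  proof (cases "q < a")
    case True
    let ?pl = "search_path q l"
    have pl: "\<forall>x\<in>set ?pl. x < a" using Node.prems(1) set_path_sub[of q l] by auto
    have path: "search_path q (Node l a r) = a # ?pl" using True by simp
    have srt: "sort (search_path q (Node l a r)) = sort ?pl @ [a]" using path sort_left[OF pl] by simp
    have hg: "hanging q (Node l a r) = hanging q l @ [r]" using True by simp
    let ?K = "map (\<lambda>v. (v, P v)) (sort ?pl @ [a])"
    have mi: "minidx (map snd ?K) = length ?pl"
    proof (rule minidx_eq)
      show "length ?pl < length (map snd ?K)" by simp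
      show "\<forall>i<length (map snd ?K). i \<noteq> length ?pl \<longrightarrow> map snd ?K ! length ?pl < map snd ?K ! i"
      proof (intro allI impI)
        fix i assume i: "i < length (map snd ?K)" "i \<noteq> length ?pl"
        hence il: "i < length ?pl" by simp
        have "sort ?pl ! i \<in> set ?pl" using il by (metis length_sort nth_mem set_sort)
        then obtain k where k: "k < length ?pl" "?pl ! k = sort ?pl ! i" by (metis in_set_conv_nth)
        have "P a < P (sort ?pl ! i)"
          using Node.prems(2)[rule_format, of 0 "Suc k"] path k by simp
        then show "map snd ?K ! length ?pl < map snd ?K ! i" using il by (simp add: nth_append)
      qed
    qed
    have IHc: "\<forall>i j. i < j \<longrightarrow> j < length ?pl \<longrightarrow> P (?pl ! i) < P (?pl ! j)"
      using Node.prems(2) path by (metis Suc_less_eq length_Cons nth_Cons_Suc)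
    have IH: "treap (map (\<lambda>v. (v, P v)) (sort ?pl)) (hanging q l) = l"
      using Node.IH(1) Node.prems(1) IHc by simp
    have lh: "length (hanging q l) = Suc (length ?pl)" by (rule length_hanging)
    have ne: "?K \<noteq> []" by simp
    have "treap ?K (hanging q l @ [r]) = (let j = minidx (map snd ?K) in
            Node (treap (take j ?K) (take (Suc j) (hanging q l @ [r]))) (fst (?K ! j))
              (treap (drop (Suc j) ?K) (drop (Suc j) (hanging q l @ [r]))))"
      by (subst treap.simps) (simp only: ne if_False)
    also have "\<dots> = Node l a r"
      unfolding Let_def mi using IH lh by (simp add: nth_append treap_Nil)
    finally show ?thesis unfolding srt hg .
  next
    case False
    show ?thesis
    proof (cases "a < q")
      case True
      let ?pr = "search_path q r"
      have pr: "\<forall>x\<in>set ?pr. a < x" using Node.prems(1) set_path_sub[of q r] by auto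
      have path: "search_path q (Node l a r) = a # ?pr" using True False by simp
      have srt: "sort (search_path q (Node l a r)) = a # sort ?pr" using path sort_right[OF pr] by simp
      have hg: "hanging q (Node l a r) = l # hanging q r" using True False by simp
      let ?K = "map (\<lambda>v. (v, P v)) (a # sort ?pr)"
      have mi: "minidx (map snd ?K) = 0"
      proof (rule minidx_eq)
        show "0 < length (map snd ?K)" by simp
        show "\<forall>i<length (map snd ?K). i \<noteq> 0 \<longrightarrow> map snd ?K ! 0 < map snd ?K ! i"
        proof (intro allI impI)
          fix i assume i: "i < length (map snd ?K)" "i \<noteq> 0"
          then obtain i' where i': "i = Suc i'" "i' < length ?pr" by (cases i) auto
          have "sort ?pr ! i' \<in> set ?pr" using i' by (metis length_sort nth_mem set_sort)
          then obtain k where k: "k < length ?pr" "?pr ! k = sort ?pr ! i'" by (metis in_set_conv_nth)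
          have "P a < P (sort ?pr ! i')"
            using Node.prems(2)[rule_format, of 0 "Suc k"] path k by simp
          then show "map snd ?K ! 0 < map snd ?K ! i" using i' by simp
        qed
      qed
      have IHc: "\<forall>i j. i < j \<longrightarrow> j < length ?pr \<longrightarrow> P (?pr ! i) < P (?pr ! j)"
        using Node.prems(2) path by (metis Suc_less_eq length_Cons nth_Cons_Suc)
      have IH: "treap (map (\<lambda>v. (v, P v)) (sort ?pr)) (hanging q r) = r"
        using Node.IH(2) Node.prems(1) IHc by simp
      have ne: "?K \<noteq> []" by simp
      have "treap ?K (l # hanging q r) = (let j = minidx (map snd ?K) in
            Node (treap (take j ?K) (take (Suc j) (l # hanging q r))) (fst (?K ! j))
              (treap (drop (Suc j) ?K) (drop (Suc j) (l # hanging q r))))"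
        by (subst treap.simps) (simp only: ne if_False)
      also have "\<dots> = Node l a r"
        unfolding Let_def mi using IH by (simp add: treap_Nil)
      finally show ?thesis unfolding srt hg .
    next
      case False2: False
      have path: "search_path q (Node l a r) = [a]" using False False2 by simp
      have hg: "hanging q (Node l a r) = [l, r]" using False False2 by simp
      have "treap [(a, P a)] [l, r] = Node l a r"
        by (subst treap.simps) (simp add: Let_def treap_Nil)
      then show ?thesis unfolding path hg by simp
    qed
  qed
qed



definition inW :: "nat set \<Rightarrow> nat \<Rightarrow> nat \<Rightarrow> bool" where
  "inW PP v y = ((\<forall>z\<in>PP. z < v \<longrightarrow> z < y) \<and> (\<forall>z\<in>PP. v < z \<longrightarrow> y < z))"

definition nxt :: "nat list \<Rightarrow> nat \<Rightarrow> (nat \<Rightarrow> bool) \<Rightarrow> enat" where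
  "nxt xs t W = (if \<exists>s. t < s \<and> s < length xs \<and> W (xs ! s)
      then enat (LEAST s. t < s \<and> s < length xs \<and> W (xs ! s)) else \<infinity>)"

lemma window_iff:
  assumes "sorted_wrt (<) vs" "i < length vs"
  shows "in_window (if i = 0 then None else Some (vs!(i-1)))
            (if Suc i < length vs then Some (vs!Suc i) else None) y \<longleftrightarrow> inW (set vs) (vs!i) y"
proof
  assume H: "in_window (if i = 0 then None else Some (vs!(i-1)))
            (if Suc i < length vs then Some (vs!Suc i) else None) y"
  show "inW (set vs) (vs!i) y" unfolding inW_def
  proof (intro conjI ballI impI)
    fix z assume z: "z \<in> set vs" "z < vs ! i"
    then obtain k where k: "k < length vs" "vs!k = z" by (metis in_set_conv_nth)
    have "k < i"
    proof (rule ccontr)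
      assume "\<not> k < i"
      hence "k = i \<or> i < k" by auto
      thus False using z k sorted_wrt_nth_less[OF assms(1), of i k] by auto
    qed
    hence "i \<noteq> 0" and lt: "vs!(i-1) < y" using H unfolding in_window_def by auto
    have "k = i - 1 \<or> k < i - 1" using \<open>k < i\<close> by auto
    then show "z < y"
    proof
      assume "k = i-1" thus ?thesis using k lt by simp
    next
      assume "k < i-1" moreover have "i - 1 < length vs" using assms(2) by simp
      ultimately have "vs!k < vs!(i-1)" using sorted_wrt_nth_less[OF assms(1), of k "i-1"] by blast
      thus ?thesis using k lt by simp
    qed
  next
    fix z assume z: "z \<in> set vs" "vs ! i < z"
    then obtain k where k: "k < length vs" "vs!k = z" by (metis in_set_conv_nth)
    have "i < k"
    proof (rule ccontr)
      assume "\<not> i < k"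
      hence "k = i \<or> k < i" by auto
      thus False using z k sorted_wrt_nth_less[OF assms(1), of k i] assms(2) by auto
    qed
    hence "Suc i < length vs" and lt: "y < vs!(Suc i)" using H k unfolding in_window_def by auto
    have "k = Suc i \<or> Suc i < k" using \<open>i < k\<close> by auto
    then show "y < z" using sorted_wrt_nth_less[OF assms(1), of "Suc i" k] k lt by auto
  qed
next
  assume H: "inW (set vs) (vs!i) y"
  show "in_window (if i = 0 then None else Some (vs!(i-1)))
            (if Suc i < length vs then Some (vs!Suc i) else None) y"
    unfolding in_window_def
  proof (intro conjI)
    show "case (if i = 0 then None else Some (vs!(i-1))) of None \<Rightarrow> True | Some a \<Rightarrow> a < y"
    proof (cases "i = 0")
      case False
      have "vs!(i-1) < vs!i" using sorted_wrt_nth_less[OF assms(1), of "i-1" i] assms(2) False by auto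
      moreover have "vs!(i-1) \<in> set vs" using assms(2) by auto
      ultimately show ?thesis using H False unfolding inW_def by auto
    qed simp
    show "case (if Suc i < length vs then Some (vs!Suc i) else None) of None \<Rightarrow> True | Some b \<Rightarrow> y < b"
    proof (cases "Suc i < length vs")
      case True
      have "vs!i < vs!Suc i" using sorted_wrt_nth_less[OF assms(1), of i "Suc i"] True by auto
      moreover have "vs!Suc i \<in> set vs" using True by auto
      ultimately show ?thesis using H True unfolding inW_def by auto
    qed simp
  qed
qed

lemma filter_take_gap:
  assumes "t < s" "s \<le> length xs" "\<forall>k. t < k \<and> k < s \<longrightarrow> \<not> P (xs!k)"
  shows "filter P (take s xs) = filter P (take (Suc t) xs)"
  using assms
proof (induction s)
  case 0 then show ?case by simp
next
  case (Suc s)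
  show ?case
  proof (cases "s = t")
    case True then show ?thesis by simp
  next
    case False
    hence "t < s" using Suc by simp
    have "take (Suc s) xs = take s xs @ [xs ! s]" using Suc.prems by (simp add: take_Suc_conv_app_nth)
    moreover have "\<not> P (xs ! s)" using Suc.prems \<open>t < s\<close> by auto
    moreover have "filter P (take s xs) = filter P (take (Suc t) xs)"
      by (rule Suc.IH) (use Suc.prems \<open>t < s\<close> in auto)
    ultimately show ?thesis by simp
  qed
qed

lemma time_le:
  fixes S :: "nat set"
  assumes "t < length xs" "xs!t \<in> S"
    and next_prop: "\<forall>j. Suc j < length (filter (\<lambda>x. x\<in>S) xs) \<longrightarrow>
           filter (\<lambda>x. x\<in>S) xs ! j = xs!t \<longrightarrow> W1 (filter (\<lambda>x. x\<in>S) xs ! Suc j)"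
    and w2: "\<forall>s. t < s \<longrightarrow> s < length xs \<longrightarrow> W2 (xs!s) \<longrightarrow> xs!s \<in> S"
  shows "nxt xs t W1 \<le> nxt xs t W2"
proof (cases "\<exists>s. t < s \<and> s < length xs \<and> W2 (xs ! s)")
  case False
  have "nxt xs t W2 = \<infinity>" unfolding nxt_def by (rule if_not_P[OF False])
  then show ?thesis by simp
next
  case True
  define s2 where "s2 = (LEAST s. t < s \<and> s < length xs \<and> W2 (xs ! s))"
  have s2: "t < s2 \<and> s2 < length xs \<and> W2 (xs ! s2)" unfolding s2_def using True by (rule LeastI_ex)
  have ex1: "\<exists>s. t < s \<and> s < length xs \<and> xs ! s \<in> S" using s2 w2 by blast
  define s1 where "s1 = (LEAST s. t < s \<and> s < length xs \<and> xs ! s \<in> S)"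
  have s1: "t < s1 \<and> s1 < length xs \<and> xs ! s1 \<in> S" unfolding s1_def using ex1 by (rule LeastI_ex)
  have s12: "s1 \<le> s2" unfolding s1_def by (rule Least_le) (use s2 w2 in blast)
  have gap: "\<forall>k. t < k \<and> k < s1 \<longrightarrow> \<not> (xs!k \<in> S)"
  proof (intro allI impI)
    fix k assume k: "t < k \<and> k < s1"
    have "\<not> (t < k \<and> k < length xs \<and> xs ! k \<in> S)"
      using not_less_Least[of k "\<lambda>s. t < s \<and> s < length xs \<and> xs ! s \<in> S"] k unfolding s1_def by blast
    then show "\<not> (xs!k \<in> S)" using k s1 by simp
  qed
  let ?F = "filter (\<lambda>x. x\<in>S)"
  have A: "?F (take s1 xs) = ?F (take (Suc t) xs)"
    by (rule filter_take_gap) (use s1 gap in auto)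
  have B: "take (Suc t) xs = take t xs @ [xs!t]" using assms(1) by (simp add: take_Suc_conv_app_nth)
  have C: "take (Suc s1) xs = take s1 xs @ [xs!s1]" using s1 by (simp add: take_Suc_conv_app_nth)
  have D: "?F xs = ?F (take (Suc s1) xs) @ ?F (drop (Suc s1) xs)"
    by (metis append_take_drop_id filter_append)
  have E: "?F xs = ?F (take t xs) @ [xs!t, xs!s1] @ ?F (drop (Suc s1) xs)"
    using D C A B assms(2) s1 by simp
  define j where "j = length (?F (take t xs))"
  have "?F xs ! j = xs!t" "?F xs ! Suc j = xs!s1" "Suc j < length (?F xs)"
    unfolding E j_def by (simp_all add: nth_append)
  hence "W1 (xs!s1)" using next_prop by metis
  hence ex3: "\<exists>s. t < s \<and> s < length xs \<and> W1 (xs ! s)" using s1 by blast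
  have "(LEAST s. t < s \<and> s < length xs \<and> W1 (xs ! s)) \<le> s1"
    by (rule Least_le) (use s1 \<open>W1 (xs!s1)\<close> in blast)
  hence "nxt xs t W1 \<le> enat s1" unfolding nxt_def using ex3 by simp
  also have "\<dots> \<le> enat s2" using s12 by simp
  also have "enat s2 = nxt xs t W2" unfolding nxt_def s2_def using True by simp
  finally show ?thesis .
qed

lemma cyclic3_next:
  assumes "cyclic3 Xv A B C" "Suc j < length Xv"
    "A \<inter> B = {}" "A \<inter> C = {}" "B \<inter> C = {}"
  shows "Xv!j \<in> A \<union> B \<union> C"
    "Xv!j \<in> A \<Longrightarrow> Xv!Suc j \<in> B"
    "Xv!j \<in> B \<Longrightarrow> Xv!Suc j \<in> C"
    "Xv!j \<in> C \<Longrightarrow> Xv!Suc j \<in> A"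
proof -
  obtain ph where ph: "ph < 3" and H: "\<forall>j<length Xv.
        Xv ! j \<in> (if (j + ph) mod 3 = 0 then A else if (j + ph) mod 3 = 1 then B else C)"
    using assms(1) unfolding cyclic3_def by blast
  have Hj: "Xv ! j \<in> (if (j + ph) mod 3 = 0 then A else if (j + ph) mod 3 = 1 then B else C)"
    using H assms(2) by auto
  have Hs: "Xv ! Suc j \<in> (if (Suc j + ph) mod 3 = 0 then A else if (Suc j + ph) mod 3 = 1 then B else C)"
    using H assms(2) by auto
  have m: "(j + ph) mod 3 = 0 \<or> (j + ph) mod 3 = 1 \<or> (j + ph) mod 3 = 2" by auto
  have s0: "(j + ph) mod 3 = 0 \<Longrightarrow> (Suc j + ph) mod 3 = 1" by presburger
  have s1: "(j + ph) mod 3 = 1 \<Longrightarrow> (Suc j + ph) mod 3 = 2" by presburger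
  have s2: "(j + ph) mod 3 = 2 \<Longrightarrow> (Suc j + ph) mod 3 = 0" by presburger
  show "Xv!j \<in> A \<union> B \<union> C" using Hj m by (auto split: if_splits)
  show "Xv!j \<in> A \<Longrightarrow> Xv!Suc j \<in> B" using Hj Hs m s0 s1 s2 assms(3-5) by (auto split: if_splits)
  show "Xv!j \<in> B \<Longrightarrow> Xv!Suc j \<in> C" using Hj Hs m s0 s1 s2 assms(3-5) by (auto split: if_splits)
  show "Xv!j \<in> C \<Longrightarrow> Xv!Suc j \<in> A" using Hj Hs m s0 s1 s2 assms(3-5) by (auto split: if_splits)
qed



definition LOC :: "nat set \<Rightarrow> nat set \<Rightarrow> nat \<Rightarrow> nat tree \<Rightarrow> nat \<Rightarrow> nat tree \<Rightarrow> nat \<Rightarrow> bool" where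
"LOC PP U q l w r c = (
 (q < w \<and> q \<in> set_tree l \<and> (\<exists>ll lr. l = Node ll c lr \<and> (\<forall>y\<in>U. inW PP c y \<longrightarrow> y \<in> set_tree l)
    \<and> (\<forall>y\<in>set_tree r. inW PP w y) \<and> (q \<in> set_tree ll \<longrightarrow> (\<forall>y\<in>set_tree lr. inW PP w y))))
 \<or> (w < q \<and> q \<in> set_tree r \<and> (\<exists>rl rr. r = Node rl c rr \<and> (\<forall>y\<in>U. inW PP c y \<longrightarrow> y \<in> set_tree r)
    \<and> (\<forall>y\<in>set_tree l. inW PP w y) \<and> (q \<in> set_tree rr \<longrightarrow> (\<forall>y\<in>set_tree rl. inW PP w y)))))"

lemma windows_base:
  assumes bst: "bst (Node l a r)" and qin: "q \<in> set_tree (Node l a r)"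
    and sepA: "\<forall>z\<in>A. (\<forall>y\<in>set_tree (Node l a r). z < y) \<or> (\<forall>y\<in>set_tree (Node l a r). y < z)"
    and sepU: "\<forall>y\<in>U - set_tree (Node l a r). \<exists>z\<in>A. (y \<le> z \<and> (\<forall>x\<in>set_tree (Node l a r). z < x))
                   \<or> (z \<le> y \<and> (\<forall>x\<in>set_tree (Node l a r). x < z))"
    and len: "Suc 0 < length (search_path q (Node l a r))"
  shows "LOC (A \<union> set (search_path q (Node l a r))) U q l a r (search_path q (Node l a r) ! Suc 0)"
proof -
  let ?ST = "set_tree (Node l a r)"
  let ?PP = "A \<union> set (search_path q (Node l a r))"
  have lt: "\<forall>x\<in>set_tree l. x < a" and gt: "\<forall>x\<in>set_tree r. a < x" and bl: "bst l" and br: "bst r"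
    using bst by auto
  have aPP: "a \<in> ?PP" by simp
  show ?thesis
  proof (cases "q < a")
    case True
    have path: "search_path q (Node l a r) = a # search_path q l" using True by simp
    have ql: "q \<in> set_tree l" using qin True gt by auto
    obtain ll c lr where l: "l = Node ll c lr" using ql by (cases l) auto
    have c1: "search_path q (Node l a r) ! Suc 0 = c" using path l by simp
    have pl: "set (search_path q l) \<subseteq> set_tree l" by (rule set_path_sub)
    have PP: "?PP = A \<union> {a} \<union> set (search_path q l)" using path by auto
    have cl: "c \<in> set_tree l" "c < a" using l lt by auto
    have cPP: "c \<in> ?PP" using path l by simp
    have i: "\<forall>y\<in>U. inW ?PP c y \<longrightarrow> y \<in> set_tree l"
    proof (intro ballI impI)
      fix y assume yU: "y \<in> U" and w: "inW ?PP c y"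
      show "y \<in> set_tree l"
      proof (rule ccontr)
        assume nl: "y \<notin> set_tree l"
        show False
        proof (cases "y \<in> ?ST")
          case True
          hence "a \<le> y" using nl gt by auto
          moreover have "y < a" using w aPP cl unfolding inW_def by blast
          ultimately show False by simp
        next
          case False
          then obtain z where z: "z \<in> A" "(y \<le> z \<and> (\<forall>x\<in>?ST. z < x)) \<or> (z \<le> y \<and> (\<forall>x\<in>?ST. x < z))"
            using sepU yU by blast
          have zP: "z \<in> ?PP" using z by simp
          have cST: "c \<in> ?ST" using cl by simp
          from z(2) show False
          proof
            assume h: "y \<le> z \<and> (\<forall>x\<in>?ST. z < x)"
            hence "z < c" using cST by blast
            hence "z < y" using w zP unfolding inW_def by blast
            thus False using h by simp
          next
            assume h: "z \<le> y \<and> (\<forall>x\<in>?ST. x < z)"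
            hence "c < z" using cST by blast
            hence "y < z" using w zP unfolding inW_def by blast
            thus False using h by simp
          qed
        qed
      qed
    qed
    have ii: "\<forall>y\<in>set_tree r. inW ?PP a y"
    proof (intro ballI)
      fix y assume yr: "y \<in> set_tree r"
      hence yST: "y \<in> ?ST" by simp
      have ay: "a < y" using yr gt by auto
      show "inW ?PP a y" unfolding inW_def
      proof (intro conjI ballI impI)
        fix z assume zP: "z \<in> ?PP" and za: "z < a"
        show "z < y"
        proof (cases "z \<in> A")
          case True
          thus ?thesis using sepA yST za by fastforce
        next
          case False
          hence "z \<in> set_tree l \<or> z = a" using zP PP pl by auto
          thus ?thesis using za ay lt by auto
        qed
      next
        fix z assume zP: "z \<in> ?PP" and za: "a < z"
        show "y < z"
        proof (cases "z \<in> A")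
          case True
          thus ?thesis using sepA yST za by fastforce
        next
          case False
          hence "z \<in> set_tree l \<or> z = a" using zP PP pl by auto
          thus ?thesis using za lt by auto
        qed
      qed
    qed
    have iii: "q \<in> set_tree ll \<longrightarrow> (\<forall>y\<in>set_tree lr. inW ?PP a y)"
    proof (intro impI ballI)
      fix y assume qll: "q \<in> set_tree ll" and ylr: "y \<in> set_tree lr"
      have bl': "\<forall>x\<in>set_tree ll. x < c" "\<forall>x\<in>set_tree lr. c < x" using bl l by auto
      have qc: "q < c" using qll bl' by auto
      have pl2: "search_path q l = c # search_path q ll" using l qc by simp
      have pll: "set (search_path q ll) \<subseteq> set_tree ll" by (rule set_path_sub)
      have yST: "y \<in> ?ST" using ylr l by simp
      have ya: "y < a" using ylr l lt by auto
      have cy: "c < y" using ylr bl' by auto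
      show "inW ?PP a y" unfolding inW_def
      proof (intro conjI ballI impI)
        fix z assume zP: "z \<in> ?PP" and za: "z < a"
        show "z < y"
        proof (cases "z \<in> A")
          case True
          thus ?thesis using sepA yST za by fastforce
        next
          case False
          hence "z \<in> set_tree ll \<or> z = c \<or> z = a" using zP PP pl2 pll by auto
          thus ?thesis using za cy bl' by auto
        qed
      next
        fix z assume zP: "z \<in> ?PP" and za: "a < z"
        show "y < z"
        proof (cases "z \<in> A")
          case True
          thus ?thesis using sepA yST za by fastforce
        next
          case False
          hence "z \<in> set_tree l \<or> z = a" using zP PP pl by auto
          thus ?thesis using za lt by auto
        qed
      qed
    qed
    show ?thesis unfolding LOC_def c1 using True ql l i ii iii by blast
  next
    case False
    have ne: "q \<noteq> a" using len False by (auto split: if_splits)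
    hence aq: "a < q" using False by simp
    have path: "search_path q (Node l a r) = a # search_path q r" using aq by simp
    have qr: "q \<in> set_tree r" using qin aq lt by auto
    obtain rl c rr where r: "r = Node rl c rr" using qr by (cases r) auto
    have c1: "search_path q (Node l a r) ! Suc 0 = c" using path r by simp
    have pr: "set (search_path q r) \<subseteq> set_tree r" by (rule set_path_sub)
    have PP: "?PP = A \<union> {a} \<union> set (search_path q r)" using path by auto
    have cr: "c \<in> set_tree r" "a < c" using r gt by auto
    have i: "\<forall>y\<in>U. inW ?PP c y \<longrightarrow> y \<in> set_tree r"
    proof (intro ballI impI)
      fix y assume yU: "y \<in> U" and w: "inW ?PP c y"
      show "y \<in> set_tree r"
      proof (rule ccontr)
        assume nr: "y \<notin> set_tree r"
        show False
        proof (cases "y \<in> ?ST")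
          case True
          hence "y \<le> a" using nr lt by auto
          moreover have "a < y" using w aPP cr unfolding inW_def by blast
          ultimately show False by simp
        next
          case False
          then obtain z where z: "z \<in> A" "(y \<le> z \<and> (\<forall>x\<in>?ST. z < x)) \<or> (z \<le> y \<and> (\<forall>x\<in>?ST. x < z))"
            using sepU yU by blast
          have zP: "z \<in> ?PP" using z by simp
          have cST: "c \<in> ?ST" using cr by simp
          from z(2) show False
          proof
            assume h: "y \<le> z \<and> (\<forall>x\<in>?ST. z < x)"
            hence "z < c" using cST by blast
            hence "z < y" using w zP unfolding inW_def by blast
            thus False using h by simp
          next
            assume h: "z \<le> y \<and> (\<forall>x\<in>?ST. x < z)"
            hence "c < z" using cST by blast
            hence "y < z" using w zP unfolding inW_def by blast
            thus False using h by simp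
          qed
        qed
      qed
    qed
    have ii: "\<forall>y\<in>set_tree l. inW ?PP a y"
    proof (intro ballI)
      fix y assume yl: "y \<in> set_tree l"
      hence yST: "y \<in> ?ST" by simp
      have ya: "y < a" using yl lt by auto
      show "inW ?PP a y" unfolding inW_def
      proof (intro conjI ballI impI)
        fix z assume zP: "z \<in> ?PP" and za: "z < a"
        show "z < y"
        proof (cases "z \<in> A")
          case True
          thus ?thesis using sepA yST za by fastforce
        next
          case False
          hence "z \<in> set_tree r \<or> z = a" using zP PP pr by auto
          thus ?thesis using za gt by auto
        qed
      next
        fix z assume zP: "z \<in> ?PP" and za: "a < z"
        show "y < z"
        proof (cases "z \<in> A")
          case True
          thus ?thesis using sepA yST za by fastforce
        next
          case False
          hence "z \<in> set_tree r \<or> z = a" using zP PP pr by auto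
          thus ?thesis using za ya gt by auto
        qed
      qed
    qed
    have iii: "q \<in> set_tree rr \<longrightarrow> (\<forall>y\<in>set_tree rl. inW ?PP a y)"
    proof (intro impI ballI)
      fix y assume qrr: "q \<in> set_tree rr" and yrl: "y \<in> set_tree rl"
      have br': "\<forall>x\<in>set_tree rl. x < c" "\<forall>x\<in>set_tree rr. c < x" using br r by auto
      have qc: "c < q" using qrr br' by auto
      have pr2: "search_path q r = c # search_path q rr" using r qc by simp
      have prr: "set (search_path q rr) \<subseteq> set_tree rr" by (rule set_path_sub)
      have yST: "y \<in> ?ST" using yrl r by simp
      have ay: "a < y" using yrl r gt by auto
      have yc: "y < c" using yrl br' by auto
      show "inW ?PP a y" unfolding inW_def
      proof (intro conjI ballI impI)
        fix z assume zP: "z \<in> ?PP" and za: "z < a"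
        show "z < y"
        proof (cases "z \<in> A")
          case True
          thus ?thesis using sepA yST za by fastforce
        next
          case False
          hence "z \<in> set_tree r \<or> z = a" using zP PP pr by auto
          thus ?thesis using za gt by auto
        qed
      next
        fix z assume zP: "z \<in> ?PP" and za: "a < z"
        show "y < z"
        proof (cases "z \<in> A")
          case True
          thus ?thesis using sepA yST za by fastforce
        next
          case False
          hence "z \<in> set_tree rr \<or> z = c \<or> z = a" using zP PP pr2 prr by auto
          thus ?thesis using za yc br' by auto
        qed
      qed
    qed
    show ?thesis unfolding LOC_def c1 using aq qr r i ii iii by blast
  qed
qed



lemma windows:
  assumes "bst T" "q \<in> set_tree T"
    "\<forall>z\<in>A. (\<forall>y\<in>set_tree T. z < y) \<or> (\<forall>y\<in>set_tree T. y < z)"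
    "\<forall>y\<in>U - set_tree T. \<exists>z\<in>A. (y \<le> z \<and> (\<forall>x\<in>set_tree T. z < x)) \<or> (z \<le> y \<and> (\<forall>x\<in>set_tree T. x < z))"
    "Suc i < length (search_path q T)"
  shows "\<exists>l r. Node l (search_path q T ! i) r \<in> subtrees T \<and>
     LOC (A \<union> set (search_path q T)) U q l (search_path q T ! i) r (search_path q T ! Suc i)"
  using assms
proof (induction T arbitrary: A i)
  case Leaf then show ?case by simp
next
  case (Node l a r)
  have lt: "\<forall>x\<in>set_tree l. x < a" and gt: "\<forall>x\<in>set_tree r. a < x" and bl: "bst l" and br: "bst r"
    using Node.prems(1) by auto
  show ?case
  proof (cases i)
    case 0
    have H: "LOC (A \<union> set (search_path q (Node l a r))) U q l a r (search_path q (Node l a r) ! Suc 0)"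
    proof (rule windows_base[OF Node.prems(1-4)])
      show "Suc 0 < length (search_path q (Node l a r))" using Node.prems(5) 0 by simp
    qed
    have n: "Node l (search_path q (Node l a r) ! 0) r \<in> subtrees (Node l a r)" by simp
    have a0: "search_path q (Node l a r) ! 0 = a" by simp
    show ?thesis unfolding 0 a0
      by (rule exI[of _ l], rule exI[of _ r], rule conjI[OF _ H]) simp
  next
    case (Suc i')
    show ?thesis
    proof (cases "q < a")
      case True
      have path: "search_path q (Node l a r) = a # search_path q l" using True by simp
      have ql: "q \<in> set_tree l" using Node.prems(2) True gt by auto
      have "\<exists>l' r'. Node l' (search_path q l ! i') r' \<in> subtrees l \<and>
         LOC (insert a A \<union> set (search_path q l)) U q l' (search_path q l ! i') r' (search_path q l ! Suc i')"
      proof (rule Node.IH(1))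
        show "bst l" by (rule bl)
        show "q \<in> set_tree l" by (rule ql)
        show "\<forall>z\<in>insert a A. (\<forall>y\<in>set_tree l. z < y) \<or> (\<forall>y\<in>set_tree l. y < z)"
        proof
          fix z assume "z \<in> insert a A"
          then consider "z = a" | "z \<in> A" by blast
          then show "(\<forall>y\<in>set_tree l. z < y) \<or> (\<forall>y\<in>set_tree l. y < z)"
          proof cases
            case 1 then show ?thesis using lt by blast
          next
            case 2
            then have "(\<forall>y\<in>set_tree (Node l a r). z < y) \<or> (\<forall>y\<in>set_tree (Node l a r). y < z)"
              using Node.prems(3) by blast
            moreover have "set_tree l \<subseteq> set_tree (Node l a r)" by auto
            ultimately show ?thesis by blast
          qed
        qed
        show "\<forall>y\<in>U - set_tree l. \<exists>z\<in>insert a A. (y \<le> z \<and> (\<forall>x\<in>set_tree l. z < x)) \<or> (z \<le> y \<and> (\<forall>x\<in>set_tree l. x < z))"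
        proof
          fix y assume y: "y \<in> U - set_tree l"
          show "\<exists>z\<in>insert a A. (y \<le> z \<and> (\<forall>x\<in>set_tree l. z < x)) \<or> (z \<le> y \<and> (\<forall>x\<in>set_tree l. x < z))"
          proof (cases "y \<in> set_tree (Node l a r)")
            case True
            hence "a \<le> y" using y gt by auto
            hence "a \<le> y \<and> (\<forall>x\<in>set_tree l. x < a)" using lt by blast
            thus ?thesis by blast
          next
            case False
            then obtain z where "z \<in> A" "(y \<le> z \<and> (\<forall>x\<in>set_tree (Node l a r). z < x)) \<or> (z \<le> y \<and> (\<forall>x\<in>set_tree (Node l a r). x < z))"
              using Node.prems(4) y by blast
            moreover have "set_tree l \<subseteq> set_tree (Node l a r)" "set_tree r \<subseteq> set_tree (Node l a r)" by auto
            ultimately show ?thesis by blast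
          qed
        qed
        show "Suc i' < length (search_path q l)" using Node.prems(5) path Suc by simp
      qed
      then obtain l' r' where H: "Node l' (search_path q l ! i') r' \<in> subtrees l"
         "LOC (insert a A \<union> set (search_path q l)) U q l' (search_path q l ! i') r' (search_path q l ! Suc i')"
        by blast
      have PP: "insert a A \<union> set (search_path q l) = A \<union> set (search_path q (Node l a r))" using path by auto
      have e1: "search_path q (Node l a r) ! Suc i' = search_path q l ! i'" using path by simp
      have e2: "search_path q (Node l a r) ! Suc (Suc i') = search_path q l ! Suc i'" using path by simp
      have sub: "subtrees l \<subseteq> subtrees (Node l a r)" by auto
      show ?thesis unfolding Suc e1 e2 PP[symmetric] using H sub by blast
    next
      case False
      have ne: "q \<noteq> a"
      proof
        assume "q = a" hence "search_path q (Node l a r) = [a]" by simp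
        thus False using Node.prems(5) by simp
      qed
      hence aq: "a < q" using False by simp
      have path: "search_path q (Node l a r) = a # search_path q r" using aq by simp
      have qr: "q \<in> set_tree r" using Node.prems(2) aq lt by auto
      have "\<exists>l' r'. Node l' (search_path q r ! i') r' \<in> subtrees r \<and>
         LOC (insert a A \<union> set (search_path q r)) U q l' (search_path q r ! i') r' (search_path q r ! Suc i')"
      proof (rule Node.IH(2))
        show "bst r" by (rule br)
        show "q \<in> set_tree r" by (rule qr)
        show "\<forall>z\<in>insert a A. (\<forall>y\<in>set_tree r. z < y) \<or> (\<forall>y\<in>set_tree r. y < z)"
        proof
          fix z assume "z \<in> insert a A"
          then consider "z = a" | "z \<in> A" by blast
          then show "(\<forall>y\<in>set_tree r. z < y) \<or> (\<forall>y\<in>set_tree r. y < z)"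
          proof cases
            case 1 then show ?thesis using gt by blast
          next
            case 2
            then have "(\<forall>y\<in>set_tree (Node l a r). z < y) \<or> (\<forall>y\<in>set_tree (Node l a r). y < z)"
              using Node.prems(3) by blast
            moreover have "set_tree r \<subseteq> set_tree (Node l a r)" by auto
            ultimately show ?thesis by blast
          qed
        qed
        show "\<forall>y\<in>U - set_tree r. \<exists>z\<in>insert a A. (y \<le> z \<and> (\<forall>x\<in>set_tree r. z < x)) \<or> (z \<le> y \<and> (\<forall>x\<in>set_tree r. x < z))"
        proof
          fix y assume y: "y \<in> U - set_tree r"
          show "\<exists>z\<in>insert a A. (y \<le> z \<and> (\<forall>x\<in>set_tree r. z < x)) \<or> (z \<le> y \<and> (\<forall>x\<in>set_tree r. x < z))"
          proof (cases "y \<in> set_tree (Node l a r)")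
            case True
            hence "y \<le> a" using y lt by auto
            hence "y \<le> a \<and> (\<forall>x\<in>set_tree r. a < x)" using gt by blast
            thus ?thesis by blast
          next
            case False
            then obtain z where "z \<in> A" "(y \<le> z \<and> (\<forall>x\<in>set_tree (Node l a r). z < x)) \<or> (z \<le> y \<and> (\<forall>x\<in>set_tree (Node l a r). x < z))"
              using Node.prems(4) y by blast
            moreover have "set_tree l \<subseteq> set_tree (Node l a r)" "set_tree r \<subseteq> set_tree (Node l a r)" by auto
            ultimately show ?thesis by blast
          qed
        qed
        show "Suc i' < length (search_path q r)" using Node.prems(5) path Suc by simp
      qed
      then obtain l' r' where H: "Node l' (search_path q r ! i') r' \<in> subtrees r"
         "LOC (insert a A \<union> set (search_path q r)) U q l' (search_path q r ! i') r' (search_path q r ! Suc i')"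
        by blast
      have PP: "insert a A \<union> set (search_path q r) = A \<union> set (search_path q (Node l a r))" using path by auto
      have e1: "search_path q (Node l a r) ! Suc i' = search_path q r ! i'" using path by simp
      have e2: "search_path q (Node l a r) ! Suc (Suc i') = search_path q r ! Suc i'" using path by simp
      have sub: "subtrees r \<subseteq> subtrees (Node l a r)" by auto
      show ?thesis unfolding Suc e1 e2 PP[symmetric] using H sub by blast
    qed
  qed
qed



lemma subtree_unique: "bst T \<Longrightarrow> Node l1 x r1 \<in> subtrees T \<Longrightarrow> Node l2 x r2 \<in> subtrees T \<Longrightarrow> l1 = l2 \<and> r1 = r2"
proof (induction T)
  case Leaf then show ?case by simp
next
  case (Node l a r)
  have lt: "\<forall>y\<in>set_tree l. y < a" and gt: "\<forall>y\<in>set_tree r. a < y" using Node.prems(1) by auto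
  have m1: "Node l1 x r1 = Node l a r \<or> Node l1 x r1 \<in> subtrees l \<or> Node l1 x r1 \<in> subtrees r" using Node.prems(2) by simp
  have m2: "Node l2 x r2 = Node l a r \<or> Node l2 x r2 \<in> subtrees l \<or> Node l2 x r2 \<in> subtrees r" using Node.prems(3) by simp
  have xl1: "Node l1 x r1 \<in> subtrees l \<Longrightarrow> x \<in> set_tree l" by (rule in_set_tree_if)
  have xr1: "Node l1 x r1 \<in> subtrees r \<Longrightarrow> x \<in> set_tree r" by (rule in_set_tree_if)
  have xl2: "Node l2 x r2 \<in> subtrees l \<Longrightarrow> x \<in> set_tree l" by (rule in_set_tree_if)
  have xr2: "Node l2 x r2 \<in> subtrees r \<Longrightarrow> x \<in> set_tree r" by (rule in_set_tree_if)
  show ?case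
  proof -
    { assume "Node l1 x r1 \<in> subtrees l" "Node l2 x r2 \<in> subtrees l"
      hence ?thesis using Node.IH(1) Node.prems(1) by auto }
    moreover
    { assume "Node l1 x r1 \<in> subtrees r" "Node l2 x r2 \<in> subtrees r"
      hence ?thesis using Node.IH(2) Node.prems(1) by auto }
    moreover
    { assume "Node l1 x r1 = Node l a r" "Node l2 x r2 = Node l a r"
      hence ?thesis by simp }
    ultimately show ?thesis using m1 m2 xl1 xr1 xl2 xr2 lt gt
      by (metis Node.prems(1) less_irrefl less_trans tree.inject)
  qed
qed

lemma leaf_keys_sub: "leaf_keys T \<subseteq> set_tree T"
proof
  fix x assume "x \<in> leaf_keys T"
  hence "Node Leaf x Leaf \<in> subtrees T" unfolding leaf_keys_def by simp
  thus "x \<in> set_tree T" by (rule in_set_tree_if)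
qed

lemma LOC_E:
  assumes "LOC PP U q l w r c"
  obtains ll lr where "q < w" "q \<in> set_tree l" "l = Node ll c lr" "\<forall>y\<in>U. inW PP c y \<longrightarrow> y \<in> set_tree l"
      "\<forall>y\<in>set_tree r. inW PP w y" "q \<in> set_tree ll \<longrightarrow> (\<forall>y\<in>set_tree lr. inW PP w y)"
  | rl rr where "w < q" "q \<in> set_tree r" "r = Node rl c rr" "\<forall>y\<in>U. inW PP c y \<longrightarrow> y \<in> set_tree r"
      "\<forall>y\<in>set_tree l. inW PP w y" "q \<in> set_tree rr \<longrightarrow> (\<forall>y\<in>set_tree rl. inW PP w y)"
proof -
  have D: "(q < w \<and> q \<in> set_tree l \<and> (\<exists>ll lr. l = Node ll c lr \<and> (\<forall>y\<in>U. inW PP c y \<longrightarrow> y \<in> set_tree l)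
    \<and> (\<forall>y\<in>set_tree r. inW PP w y) \<and> (q \<in> set_tree ll \<longrightarrow> (\<forall>y\<in>set_tree lr. inW PP w y))))
 \<or> (w < q \<and> q \<in> set_tree r \<and> (\<exists>rl rr. r = Node rl c rr \<and> (\<forall>y\<in>U. inW PP c y \<longrightarrow> y \<in> set_tree r)
    \<and> (\<forall>y\<in>set_tree l. inW PP w y) \<and> (q \<in> set_tree rr \<longrightarrow> (\<forall>y\<in>set_tree rl. inW PP w y))))"
    using assms unfolding LOC_def .
  show thesis
  proof (rule disjE[OF D])
    assume H: "q < w \<and> q \<in> set_tree l \<and> (\<exists>ll lr. l = Node ll c lr \<and> (\<forall>y\<in>U. inW PP c y \<longrightarrow> y \<in> set_tree l)
    \<and> (\<forall>y\<in>set_tree r. inW PP w y) \<and> (q \<in> set_tree ll \<longrightarrow> (\<forall>y\<in>set_tree lr. inW PP w y)))"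
    then obtain ll lr where "l = Node ll c lr \<and> (\<forall>y\<in>U. inW PP c y \<longrightarrow> y \<in> set_tree l)
    \<and> (\<forall>y\<in>set_tree r. inW PP w y) \<and> (q \<in> set_tree ll \<longrightarrow> (\<forall>y\<in>set_tree lr. inW PP w y))" by (elim conjE exE) (rule that, (intro conjI; assumption))
    then show thesis using H by (intro that(1)[of ll lr]) (elim conjE; assumption)+
  next
    assume H: "w < q \<and> q \<in> set_tree r \<and> (\<exists>rl rr. r = Node rl c rr \<and> (\<forall>y\<in>U. inW PP c y \<longrightarrow> y \<in> set_tree r)
    \<and> (\<forall>y\<in>set_tree l. inW PP w y) \<and> (q \<in> set_tree rr \<longrightarrow> (\<forall>y\<in>set_tree rl. inW PP w y)))"
    then obtain rl rr where "r = Node rl c rr \<and> (\<forall>y\<in>U. inW PP c y \<longrightarrow> y \<in> set_tree r)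
    \<and> (\<forall>y\<in>set_tree l. inW PP w y) \<and> (q \<in> set_tree rr \<longrightarrow> (\<forall>y\<in>set_tree rl. inW PP w y))" by (elim conjE exE) (rule that, (intro conjI; assumption))
    then show thesis using H by (intro that(2)[of rl rr]) (elim conjE; assumption)+
  qed
qed

lemma disj_lt: "\<forall>y\<in>A. y < (w::nat) \<Longrightarrow> \<forall>y\<in>B. w < y \<Longrightarrow> A \<inter> B = {}"
  by fastforce

lemma step_le:
  assumes bst: "bst T0" and full: "full_tree T0" and ms: "mixed_stable T0 xs"
    and xsL: "set xs \<subseteq> leaf_keys T0"
    and t: "t < length xs"
    and sub: "Node l w r \<in> subtrees T0"
    and loc: "LOC PP (set_tree T0) (xs!t) l w r c"
  shows "nxt xs t (inW PP w) \<le> nxt xs t (inW PP c)"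
proof -
  let ?q = "xs!t"
  let ?S = "set_tree (Node l w r)"
  let ?Xv = "filter (\<lambda>x. x \<in> ?S) xs"
  have Xv_def: "subseq_in xs (Node l w r) = ?Xv" unfolding subseq_in_def by simp
  have bS: "bst (Node l w r)" using bst sub by (rule bst_subtrees)
  have lt: "\<forall>y\<in>set_tree l. y < w" and gt: "\<forall>y\<in>set_tree r. w < y" and bl: "bst l" and br: "bst r"
    using bS by auto
  have xsU: "set xs \<subseteq> set_tree T0" using order_trans[OF xsL leaf_keys_sub] .
  have lr_ne: "l \<noteq> Leaf \<or> r \<noteq> Leaf" by (rule LOC_E[OF loc]) simp_all
  have lne: "l \<noteq> Leaf"
  proof -
    have "l = Leaf \<longleftrightarrow> r = Leaf" using full sub unfolding full_tree_def by blast
    thus ?thesis using lr_ne by blast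
  qed
  have wnotleaf: "w \<notin> leaf_keys T0"
  proof
    assume "w \<in> leaf_keys T0"
    hence "Node Leaf w Leaf \<in> subtrees T0" unfolding leaf_keys_def by simp
    hence "l = Leaf" using subtree_unique[OF bst sub] by blast
    thus False using lne by simp
  qed
  have Xv_in: "\<And>k. k < length ?Xv \<Longrightarrow> ?Xv ! k \<in> ?S \<and> ?Xv ! k \<in> leaf_keys T0"
  proof -
    fix k assume "k < length ?Xv"
    hence m: "?Xv ! k \<in> set ?Xv" by (rule nth_mem)
    hence "?Xv ! k \<in> set xs" by simp
    hence "?Xv ! k \<in> leaf_keys T0" using xsL by blast
    moreover have "?Xv ! k \<in> ?S" using m by simp
    ultimately show "?Xv ! k \<in> ?S \<and> ?Xv ! k \<in> leaf_keys T0" by blast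
  qed
  have stab: "strongly_stable xs (Node l w r) \<or> weakly_stable_left xs (Node l w r) \<or> weakly_stable_right xs (Node l w r)"
    using ms[unfolded mixed_stable_def, rule_format, OF conjI[OF sub lne]] .
  show ?thesis
  proof (rule time_le[where S = ?S])
    show "t < length xs" by (rule t)
    have "?q \<in> set_tree l \<or> ?q \<in> set_tree r" by (rule LOC_E[OF loc]) simp_all
    thus "?q \<in> ?S" by auto
    show "\<forall>s. t < s \<longrightarrow> s < length xs \<longrightarrow> inW PP c (xs!s) \<longrightarrow> xs!s \<in> ?S"
    proof (intro allI impI)
      fix s assume s: "t < s" "s < length xs" "inW PP c (xs!s)"
      have "xs!s \<in> set_tree T0" using s(2) xsU nth_mem by blast
      hence "xs!s \<in> set_tree l \<or> xs!s \<in> set_tree r"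
        by - (rule LOC_E[OF loc]; use s(3) in blast)
      thus "xs!s \<in> ?S" by auto
    qed
    show "\<forall>j. Suc j < length ?Xv \<longrightarrow> ?Xv ! j = ?q \<longrightarrow> inW PP w (?Xv ! Suc j)"
    proof (intro allI impI)
      fix j assume j: "Suc j < length ?Xv" "?Xv ! j = ?q"
      have inS: "?Xv ! Suc j \<in> ?S" "?Xv ! Suc j \<in> leaf_keys T0" using Xv_in j(1) by auto
      have nw: "?Xv ! Suc j \<noteq> w" using inS(2) wnotleaf by auto
      from loc[unfolded LOC_def] show "inW PP w (?Xv ! Suc j)"
      proof
        assume H: "?q < w \<and> ?q \<in> set_tree l \<and> (\<exists>ll lr. l = Node ll c lr \<and> (\<forall>y\<in>set_tree T0. inW PP c y \<longrightarrow> y \<in> set_tree l)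
             \<and> (\<forall>y\<in>set_tree r. inW PP w y) \<and> (?q \<in> set_tree ll \<longrightarrow> (\<forall>y\<in>set_tree lr. inW PP w y)))"
        then obtain ll lr where l: "l = Node ll c lr" and ii: "\<forall>y\<in>set_tree r. inW PP w y"
          and iii: "?q \<in> set_tree ll \<longrightarrow> (\<forall>y\<in>set_tree lr. inW PP w y)" and ql: "?q \<in> set_tree l" by blast
        have ll: "\<forall>y\<in>set_tree ll. y < c" and lr: "\<forall>y\<in>set_tree lr. c < y" using bl l by auto
        have d1: "set_tree ll \<inter> set_tree lr = {}" using ll lr by fastforce
        have "\<forall>y\<in>set_tree ll. y < w" "\<forall>y\<in>set_tree lr. y < w" using lt l by simp_all
        hence d2: "set_tree ll \<inter> set_tree r = {}" and d3: "set_tree lr \<inter> set_tree r = {}"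
          using disj_lt gt by blast+
        have d4: "set_tree l \<inter> set_tree r = {}" using lt gt by fastforce
        from stab show ?thesis
        proof (elim disjE)
          assume "strongly_stable xs (Node l w r)"
          hence "?Xv ! j \<in> set_tree l \<longleftrightarrow> ?Xv ! Suc j \<in> set_tree r"
            using j(1) unfolding strongly_stable_def Xv_def Let_def by simp
          thus ?thesis using ii ql j(2) by auto
        next
          assume "weakly_stable_left xs (Node l w r)"
          hence cy0: "cyclic3 (subseq_in xs (Node l w r)) (set_tree ll) (set_tree lr) (set_tree r)"
            unfolding weakly_stable_left_def by (simp add: l)
          hence cy: "cyclic3 ?Xv (set_tree ll) (set_tree lr) (set_tree r)" unfolding Xv_def .
          note C = cyclic3_next[OF cy j(1) d1 d2 d3]
          have "?q \<in> set_tree ll \<or> ?q \<in> set_tree lr \<or> ?q \<in> set_tree r" using C(1) j(2) by auto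
          thus ?thesis
          proof (elim disjE)
            assume "?q \<in> set_tree ll"
            thus ?thesis using C(2) j(2) iii by auto
          next
            assume "?q \<in> set_tree lr"
            thus ?thesis using C(3) j(2) ii by auto
          next
            assume "?q \<in> set_tree r"
            thus ?thesis using ql d4 by auto
          qed
        next
          assume wr: "weakly_stable_right xs (Node l w r)"
          then obtain ul b ur where r: "r = Node ul b ur" unfolding weakly_stable_right_def
            by (cases r) auto
          have cy0: "cyclic3 (subseq_in xs (Node l w r)) (set_tree ur) (set_tree ul) (set_tree l)"
            using wr unfolding weakly_stable_right_def by (simp add: r)
          hence cy: "cyclic3 ?Xv (set_tree ur) (set_tree ul) (set_tree l)" unfolding Xv_def .
          have e1: "set_tree ur \<inter> set_tree ul = {}" using br r by fastforce
          have e2: "set_tree ur \<inter> set_tree l = {}" using d4 r by fastforce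
          have e3: "set_tree ul \<inter> set_tree l = {}" using d4 r by fastforce
          note C = cyclic3_next[OF cy j(1) e1 e2 e3]
          have "?q \<in> set_tree l" by (rule ql)
          hence "?Xv ! Suc j \<in> set_tree ur" using C(4) j(2) by auto
          thus ?thesis using ii r by auto
        qed
      next
        assume H: "w < ?q \<and> ?q \<in> set_tree r \<and> (\<exists>rl rr. r = Node rl c rr \<and> (\<forall>y\<in>set_tree T0. inW PP c y \<longrightarrow> y \<in> set_tree r)
             \<and> (\<forall>y\<in>set_tree l. inW PP w y) \<and> (?q \<in> set_tree rr \<longrightarrow> (\<forall>y\<in>set_tree rl. inW PP w y)))"
        then obtain rl rr where r: "r = Node rl c rr" and ii: "\<forall>y\<in>set_tree l. inW PP w y"
          and iii: "?q \<in> set_tree rr \<longrightarrow> (\<forall>y\<in>set_tree rl. inW PP w y)" and qr: "?q \<in> set_tree r" by blast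
        have rl: "\<forall>y\<in>set_tree rl. y < c" and rr: "\<forall>y\<in>set_tree rr. c < y" using br r by auto
        have d4: "set_tree l \<inter> set_tree r = {}" using lt gt by fastforce
        from stab show ?thesis
        proof (elim disjE)
          assume "strongly_stable xs (Node l w r)"
          hence "?Xv ! j \<in> set_tree l \<longleftrightarrow> ?Xv ! Suc j \<in> set_tree r"
            using j(1) unfolding strongly_stable_def Xv_def Let_def by simp
          hence "?Xv ! Suc j \<notin> set_tree r" using qr d4 j(2) by auto
          hence "?Xv ! Suc j \<in> set_tree l" using inS(1) nw by auto
          thus ?thesis using ii by auto
        next
          assume wl: "weakly_stable_left xs (Node l w r)"
          then obtain ul b ur where l: "l = Node ul b ur" unfolding weakly_stable_left_def
            by (cases l) auto
          have cy0: "cyclic3 (subseq_in xs (Node l w r)) (set_tree ul) (set_tree ur) (set_tree r)"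
            using wl unfolding weakly_stable_left_def by (simp add: l)
          hence cy: "cyclic3 ?Xv (set_tree ul) (set_tree ur) (set_tree r)" unfolding Xv_def .
          have e1: "set_tree ul \<inter> set_tree ur = {}" using bl l by fastforce
          have e2: "set_tree ul \<inter> set_tree r = {}" using d4 l by fastforce
          have e3: "set_tree ur \<inter> set_tree r = {}" using d4 l by fastforce
          note C = cyclic3_next[OF cy j(1) e1 e2 e3]
          have "?Xv ! Suc j \<in> set_tree ul" using C(4) j(2) qr by auto
          thus ?thesis using ii l by auto
        next
          assume "weakly_stable_right xs (Node l w r)"
          hence cy0: "cyclic3 (subseq_in xs (Node l w r)) (set_tree rr) (set_tree rl) (set_tree l)"
            unfolding weakly_stable_right_def by (simp add: r)
          hence cy: "cyclic3 ?Xv (set_tree rr) (set_tree rl) (set_tree l)" unfolding Xv_def .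
          have e1: "set_tree rr \<inter> set_tree rl = {}" using rl rr by fastforce
          have e2: "set_tree rr \<inter> set_tree l = {}" using d4 r by fastforce
          have e3: "set_tree rl \<inter> set_tree l = {}" using d4 r by fastforce
          note C = cyclic3_next[OF cy j(1) e1 e2 e3]
          have "?q \<in> set_tree rr \<or> ?q \<in> set_tree rl \<or> ?q \<in> set_tree l" using C(1) j(2) by auto
          thus ?thesis
          proof (elim disjE)
            assume "?q \<in> set_tree rr"
            thus ?thesis using C(2) j(2) iii by auto
          next
            assume "?q \<in> set_tree rl"
            thus ?thesis using C(3) j(2) ii by auto
          next
            assume "?q \<in> set_tree l"
            thus ?thesis using qr d4 by auto
          qed
        qed
      qed
    qed
  qed
qed



lemma chain_less:
  fixes f :: "nat \<Rightarrow> 'b::order"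
  assumes "\<forall>i. Suc i < n \<longrightarrow> f i < f (Suc i)"
  shows "i < j \<Longrightarrow> j < n \<Longrightarrow> f i < f j"
proof (induction j)
  case 0 then show ?case by simp
next
  case (Suc j)
  show ?case
  proof (cases "i = j")
    case True then show ?thesis using assms Suc.prems by simp
  next
    case False
    hence "f i < f j" using Suc by simp
    also have "f j < f (Suc j)" using assms Suc.prems by simp
    finally show ?thesis .
  qed
qed

lemma gf_step_id:
  assumes bst: "bst T" and full: "full_tree T" and xsL: "set xs \<subseteq> leaf_keys T"
    and ms: "mixed_stable T xs" and t: "t < length xs"
  shows "gf_step xs t T = T"
proof -
  define q where "q = xs!t"
  define path where "path = search_path q T"
  define vs where "vs = sort path"
  define k where "k = length vs"
  define lo where "lo = (\<lambda>i. if i = 0 then None else Some (vs ! (i - 1)))"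
  define hi where "hi = (\<lambda>i. if Suc i < k then Some (vs ! Suc i) else None)"
  define prio where "prio = (\<lambda>i. (next_in xs t (lo i) (hi i), depth (vs ! i) T))"
  have G: "gf_step xs t T = treap (map (\<lambda>i. (vs ! i, prio i)) [0..<k]) (hanging q T)"
    unfolding gf_step_def Let_def q_def path_def vs_def k_def lo_def hi_def prio_def by (rule refl)
  have qT: "q \<in> set_tree T"
  proof -
    have "q \<in> set xs" unfolding q_def using t by simp
    thus ?thesis using subsetD[OF order_trans[OF xsL leaf_keys_sub]] by simp
  qed
  have dist: "distinct path" unfolding path_def using bst by (rule distinct_path)
  have svs: "sorted_wrt (<) vs" unfolding vs_def strict_sorted_iff using dist by simp
  have setvs: "set vs = set path" unfolding vs_def by simp
  have kl: "k = length path" unfolding k_def vs_def by simp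
  have dvs: "distinct vs" unfolding vs_def using dist by simp
  have inj: "inj_on (nth vs) {..<k}" by (rule inj_on_nth) (use dvs k_def in auto)
  define P where "P = (\<lambda>v. prio (inv_into {..<k} (nth vs) v))"
  have Pi: "\<And>i. i < k \<Longrightarrow> P (vs ! i) = prio i"
    unfolding P_def using inj by (simp add: inv_into_f_f)
  have map: "map (\<lambda>i. (vs ! i, prio i)) [0..<k] = map (\<lambda>v. (v, P v)) vs"
    by (rule nth_equalityI) (simp_all add: k_def Pi)
  have Pv: "\<And>v. v \<in> set path \<Longrightarrow> P v = (nxt xs t (inW (set path) v), depth v T)"
  proof -
    fix v assume v: "v \<in> set path"
    define idx where "idx = inv_into {..<k} (nth vs) v"
    have "v \<in> set vs" using v setvs by simp
    then obtain i0 where i0: "i0 < length vs" "vs ! i0 = v" by (auto simp: in_set_conv_nth)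
    have vim: "v \<in> nth vs ` {..<k}" by (rule image_eqI[of _ _ i0]) (use i0 k_def in auto)
    have idx: "idx < k" "vs ! idx = v" unfolding idx_def
      using inv_into_into[OF vim] f_inv_into_f[OF vim] by auto
    have win: "in_window (lo idx) (hi idx) = inW (set path) v"
    proof (rule ext)
      fix y show "in_window (lo idx) (hi idx) y = inW (set path) v y"
        using window_iff[OF svs, of idx y] idx unfolding lo_def hi_def k_def setvs by simp
    qed
    have "next_in xs t (lo idx) (hi idx) = nxt xs t (inW (set path) v)"
      unfolding next_in_def nxt_def win ..
    thus "P v = (nxt xs t (inW (set path) v), depth v T)"
      unfolding P_def prio_def idx_def[symmetric] using idx by simp
  qed
  have cons: "\<forall>i. Suc i < length path \<longrightarrow> P (path ! i) < P (path ! Suc i)"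
  proof (intro allI impI)
    fix i assume i: "Suc i < length path"
    have m1: "path ! i \<in> set path" "path ! Suc i \<in> set path" using i by auto
    have d1: "depth (path ! i) T = i" "depth (path ! Suc i) T = Suc i"
      unfolding depth_def path_def using depth_path[OF bst, of i q] depth_path[OF bst, of "Suc i" q] i
      unfolding path_def by simp_all
    obtain l r where lr: "Node l (path ! i) r \<in> subtrees T"
       "LOC ({} \<union> set path) (set_tree T) q l (path ! i) r (path ! Suc i)"
    proof -
      have "\<exists>l r. Node l (search_path q T ! i) r \<in> subtrees T \<and>
        LOC ({} \<union> set (search_path q T)) (set_tree T) q l (search_path q T ! i) r (search_path q T ! Suc i)"
        by (rule windows[OF bst qT]) (use i path_def in auto)
      thus ?thesis using that unfolding path_def by blast
    qed
    have le: "nxt xs t (inW (set path) (path ! i)) \<le> nxt xs t (inW (set path) (path ! Suc i))"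
      using step_le[OF bst full ms xsL t lr(1)] lr(2) unfolding q_def by simp
    show "P (path ! i) < P (path ! Suc i)"
      using Pv[OF m1(1)] Pv[OF m1(2)] d1 le by simp
  qed
  have heap: "\<forall>i j. i < j \<longrightarrow> j < length path \<longrightarrow> P (path ! i) < P (path ! j)"
    using chain_less[of "length path" "\<lambda>i. P (path ! i)", OF cons] by blast
  have "treap (map (\<lambda>v. (v, P v)) (sort (search_path q T))) (hanging q T) = T"
    by (rule treap_path[OF bst]) (use heap path_def in simp)
  hence "treap (map (\<lambda>v. (v, P v)) vs) (hanging q T) = T" unfolding vs_def path_def .
  thus ?thesis unfolding G map .
qed

theorem lemma2:
  fixes T :: "nat tree" and xs :: "nat list" and n :: nat
  assumes "bst T"
    and "set_tree T = {1..n}"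
    and "full_tree T"
    and "set xs \<subseteq> leaf_keys T"
    and "mixed_stable T xs"
  shows "\<forall>t \<le> length xs. gf_run xs T t = T"
proof (intro allI impI)
  fix t assume "t \<le> length xs"
  then show "gf_run xs T t = T"
  proof (induction t)
    case 0 then show ?case by simp
  next
    case (Suc t)
    hence "gf_run xs T t = T" by simp
    moreover have "gf_step xs t T = T"
      by (rule gf_step_id) (use assms Suc.prems in auto)
    ultimately show ?case by simp
  qed
qed

end
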